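(* Let $l,m\in\mathbb N$ and $f:[l]\to[m]$. If $l<m$ and $f$ is injective, then $\mathcal H_Ef:\mathcal H_E[l]\to\mathcal H_E[m]$ is an isometry. If $l=m$ and $f$ is bijective, then $\mathcal H_Ef$ is a unitary operator on $\mathcal H_E[l]$.
   Context: $\mathsf R\neq0$ is a finite additive commutative monoid; $\mathcal H_1$ is a finite-dimensional Hilbert space with orthonormal basis $|z\rangle_1$, $z\in\mathsf R$. $\mathbb N=\{0,1,2,\dots\}$, $[l]=\{0,\dots,l-1\}$. $E[l]=\mathsf R^l$; for $f:[l]\to[m]$, $Ef(x)_s=\sum_{r\in[l],f(r)=s}x_r$ (empty sum $=0$). $\mathcal H_E[l]=\mathcal H_1^{\otimes l}$ ($\mathcal H_E[0]=\mathbb C$) with orthonormal basis $|x\rangle=|x_0\rangle_1\otimes\cdots\otimes|x_{l-1}\rangle_1$, $x\in E[l]$, and $\mathcal H_Ef=\sum_{x\in E[l]}|Ef(x)\rangle\langle x|$, i.e. the linear map with $\mathcal H_Ef|x\rangle=|Ef(x)\rangle$. *)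

theory Defs
  imports Complex_Main
begin

text \<open>Elements of E[l] = R^l, represented as functions nat => R that vanish
  outside [l] = {0..<l}.\<close>
definition E_obj :: "nat \<Rightarrow> (nat \<Rightarrow> 'r::comm_monoid_add) set" where
  "E_obj l = {x. \<forall>i. l \<le> i \<longrightarrow> x i = 0}"

definition E_map :: "nat \<Rightarrow> (nat \<Rightarrow> nat) \<Rightarrow> (nat \<Rightarrow> 'r::comm_monoid_add) \<Rightarrow> (nat \<Rightarrow> 'r)" where
  "E_map l f x = (\<lambda>s. \<Sum>r\<in>{r. r < l \<and> f r = s}. x r)"

text \<open>H_E[l] = H_1^{tensor l}, identified with complex functions on the
  orthonormal basis |x>, x in E[l] (vanishing off E[l]).\<close>
definition HE :: "nat \<Rightarrow> ((nat \<Rightarrow> 'r::{comm_monoid_add,finite}) \<Rightarrow> complex) set" where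
  "HE l = {\<psi>. \<forall>x. x \<notin> E_obj l \<longrightarrow> \<psi> x = 0}"

definition HE_inner :: "nat \<Rightarrow> ((nat \<Rightarrow> 'r::{comm_monoid_add,finite}) \<Rightarrow> complex)
    \<Rightarrow> ((nat \<Rightarrow> 'r) \<Rightarrow> complex) \<Rightarrow> complex" where
  "HE_inner l \<psi> \<phi> = (\<Sum>x\<in>E_obj l. cnj (\<psi> x) * \<phi> x)"

text \<open>H_E f = sum_x |E f x><x|, i.e. the linear map with |x> |-> |E f x>.\<close>
definition HE_map :: "nat \<Rightarrow> (nat \<Rightarrow> nat) \<Rightarrow> ((nat \<Rightarrow> 'r::{comm_monoid_add,finite}) \<Rightarrow> complex)
    \<Rightarrow> ((nat \<Rightarrow> 'r) \<Rightarrow> complex)" where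
  "HE_map l f \<psi> = (\<lambda>y. \<Sum>x\<in>E_obj l. if E_map l f x = y then \<psi> x else 0)"

definition is_isometry :: "nat \<Rightarrow> nat \<Rightarrow> (((nat \<Rightarrow> 'r::{comm_monoid_add,finite}) \<Rightarrow> complex)
    \<Rightarrow> ((nat \<Rightarrow> 'r) \<Rightarrow> complex)) \<Rightarrow> bool" where
  "is_isometry l m T \<longleftrightarrow>
     (\<forall>\<psi>\<in>HE l. T \<psi> \<in> HE m) \<and>
     (\<forall>\<psi>\<in>HE l. \<forall>\<phi>\<in>HE l. \<forall>a b. T (\<lambda>x. a * \<psi> x + b * \<phi> x) = (\<lambda>y. a * T \<psi> y + b * T \<phi> y)) \<and>
     (\<forall>\<psi>\<in>HE l. \<forall>\<phi>\<in>HE l. HE_inner m (T \<psi>) (T \<phi>) = HE_inner l \<psi> \<phi>)"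

definition is_unitary :: "nat \<Rightarrow> (((nat \<Rightarrow> 'r::{comm_monoid_add,finite}) \<Rightarrow> complex)
    \<Rightarrow> ((nat \<Rightarrow> 'r) \<Rightarrow> complex)) \<Rightarrow> bool" where
  "is_unitary l T \<longleftrightarrow> is_isometry l l T \<and> T ` HE l = HE l"

end

theory Submission
  imports Defs
begin

lemma E_obj_finite: "finite (E_obj l :: (nat \<Rightarrow> 'r::{comm_monoid_add,finite}) set)"
proof -
  have "E_obj l \<subseteq> {x :: nat \<Rightarrow> 'r. \<forall>i. (i \<in> {..<l} \<longrightarrow> x i \<in> UNIV) \<and> (i \<notin> {..<l} \<longrightarrow> x i = 0)}"
    by (auto simp: E_obj_def)
  moreover have "finite {x :: nat \<Rightarrow> 'r. \<forall>i. (i \<in> {..<l} \<longrightarrow> x i \<in> UNIV) \<and> (i \<notin> {..<l} \<longrightarrow> x i = 0)}"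
    by (rule finite_set_of_finite_funs) auto
  ultimately show ?thesis by (rule finite_subset)
qed

lemma E_map_in:
  assumes "f ` {..<l} \<subseteq> {..<m}"
  shows "E_map l f x \<in> E_obj m"
proof -
  have "E_map l f x i = 0" if "m \<le> i" for i
  proof -
    have e: "{r. r < l \<and> f r = i} = {}" using assms that by fastforce
    show ?thesis unfolding E_map_def e by simp
  qed
  then show ?thesis unfolding E_obj_def by simp
qed

lemma E_map_at:
  assumes "inj_on f {..<l}" "r < l"
  shows "E_map l f x (f r) = x r"
proof -
  have "{r'. r' < l \<and> f r' = f r} = {r}" using assms by (auto simp: inj_on_def)
  then show ?thesis by (simp add: E_map_def)
qed

lemma E_map_inj:
  assumes "inj_on f {..<l}"
  shows "inj_on (E_map l f) (E_obj l)"
proof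
  fix x y assume x: "x \<in> E_obj l" and y: "y \<in> E_obj l" and e: "E_map l f x = E_map l f y"
  show "x = y"
  proof
    fix i show "x i = y i"
    proof (cases "i < l")
      case True
      then show ?thesis using E_map_at[OF assms True, of x] E_map_at[OF assms True, of y] e by simp
    next
      case False then show ?thesis using x y by (simp add: E_obj_def)
    qed
  qed
qed

lemma HE_map_at:
  assumes "inj_on f {..<l}" "x0 \<in> E_obj l"
  shows "HE_map l f \<psi> (E_map l f x0) = \<psi> x0"
proof -
  have "HE_map l f \<psi> (E_map l f x0) = (\<Sum>x\<in>E_obj l. if x = x0 then \<psi> x else 0)"
    unfolding HE_map_def
    apply (rule sum.cong, simp)
    using E_map_inj[OF assms(1)] assms(2) by (auto simp: inj_on_def)
  also have "\<dots> = \<psi> x0" using assms(2) by (simp add: E_obj_finite)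
  finally show ?thesis .
qed

lemma HE_map_out:
  assumes "y \<notin> E_map l f ` E_obj l"
  shows "HE_map l f \<psi> y = 0"
  using assms unfolding HE_map_def by (intro sum.neutral) auto

lemma isometry:
  assumes "inj_on f {..<l}" "f ` {..<l} \<subseteq> {..<m}"
  shows "is_isometry l m (HE_map l f :: ((nat \<Rightarrow> 'r::{comm_monoid_add,finite}) \<Rightarrow> complex) \<Rightarrow> _)"
  unfolding is_isometry_def
proof (intro conjI ballI allI)
  fix \<psi> :: "(nat \<Rightarrow> 'r) \<Rightarrow> complex"
  show "HE_map l f \<psi> \<in> HE m"
  proof -
    have "\<And>y. y \<notin> E_obj m \<Longrightarrow> y \<notin> E_map l f ` E_obj l" using E_map_in[OF assms(2)] by blast
    then show ?thesis unfolding HE_def by (auto intro!: HE_map_out)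
  qed
next
  fix \<psi> \<phi> :: "(nat \<Rightarrow> 'r) \<Rightarrow> complex" and a b
  show "HE_map l f (\<lambda>x. a * \<psi> x + b * \<phi> x) = (\<lambda>y. a * HE_map l f \<psi> y + b * HE_map l f \<phi> y)"
    unfolding HE_map_def sum_distrib_left sum.distrib[symmetric] by (intro ext sum.cong) auto
next
  fix \<psi> \<phi> :: "(nat \<Rightarrow> 'r) \<Rightarrow> complex"
  let ?g = "E_map l f"
  have "HE_inner m (HE_map l f \<psi>) (HE_map l f \<phi>)
      = (\<Sum>y\<in>?g ` E_obj l. cnj (HE_map l f \<psi> y) * HE_map l f \<phi> y)"
    unfolding HE_inner_def
    apply (rule sum.mono_neutral_right)
    using E_obj_finite E_map_in[OF assms(2)] by (auto simp: HE_map_out)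
  also have "\<dots> = (\<Sum>x\<in>E_obj l. cnj (HE_map l f \<psi> (?g x)) * HE_map l f \<phi> (?g x))"
    by (rule sum.reindex[OF E_map_inj[OF assms(1)], unfolded comp_def])
  also have "\<dots> = HE_inner l \<psi> \<phi>"
    unfolding HE_inner_def by (rule sum.cong) (simp_all add: HE_map_at[OF assms(1)])
  finally show "HE_inner m (HE_map l f \<psi>) (HE_map l f \<phi>) = HE_inner l \<psi> \<phi>" .
qed

theorem proposition4p10:
  fixes l m :: nat and f :: "nat \<Rightarrow> nat"
  assumes R_nontrivial: "\<exists>z::'r::{comm_monoid_add,finite}. z \<noteq> 0"
    and f_maps: "f ` {..<l} \<subseteq> {..<m}"
  shows "(l < m \<and> inj_on f {..<l} \<longrightarrow> is_isometry l m (HE_map l f :: ((nat \<Rightarrow> 'r) \<Rightarrow> complex) \<Rightarrow> _))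
       \<and> (l = m \<and> bij_betw f {..<l} {..<m} \<longrightarrow> is_unitary l (HE_map l f :: ((nat \<Rightarrow> 'r) \<Rightarrow> complex) \<Rightarrow> _))"
proof (intro conjI impI)
  assume "l < m \<and> inj_on f {..<l}"
  then show "is_isometry l m (HE_map l f :: ((nat \<Rightarrow> 'r) \<Rightarrow> complex) \<Rightarrow> _)"
    using isometry f_maps by blast
next
  assume a: "l = m \<and> bij_betw f {..<l} {..<m}"
  then have inj: "inj_on f {..<l}" and fm: "f ` {..<l} \<subseteq> {..<l}"
    using f_maps by (auto simp: bij_betw_def)
  let ?g = "E_map l f :: (nat \<Rightarrow> 'r) \<Rightarrow> _"
  have iso: "is_isometry l l (HE_map l f :: ((nat \<Rightarrow> 'r) \<Rightarrow> complex) \<Rightarrow> _)"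
    using isometry[OF inj fm] .
  have gimg: "?g ` E_obj l = E_obj l"
  proof (rule endo_inj_surj[OF E_obj_finite])
    show "?g ` E_obj l \<subseteq> E_obj l" using E_map_in[OF fm] by blast
    show "inj_on ?g (E_obj l)" using E_map_inj[OF inj] .
  qed
  have "HE_map l f ` HE l = (HE l :: ((nat \<Rightarrow> 'r) \<Rightarrow> complex) set)"
  proof
    show "HE_map l f ` HE l \<subseteq> (HE l :: ((nat \<Rightarrow> 'r) \<Rightarrow> complex) set)"
      using conjunct1[OF iso[unfolded is_isometry_def]] by (intro image_subsetI) simp
  next
    show "(HE l :: ((nat \<Rightarrow> 'r) \<Rightarrow> complex) set) \<subseteq> HE_map l f ` HE l"
    proof
      fix \<phi> :: "(nat \<Rightarrow> 'r) \<Rightarrow> complex" assume phi: "\<phi> \<in> HE l"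
      define \<psi> where "\<psi> x = (if x \<in> E_obj l then \<phi> (?g x) else 0)" for x
      have "\<psi> \<in> HE l" by (simp add: HE_def \<psi>_def)
      moreover have "HE_map l f \<psi> = \<phi>"
      proof
        fix y
        show "HE_map l f \<psi> y = \<phi> y"
        proof (cases "y \<in> E_obj l")
          case True
          then obtain x where x: "x \<in> E_obj l" "y = ?g x" using gimg by blast
          then show ?thesis using HE_map_at[OF inj x(1)] by (simp add: \<psi>_def)
        next
          case False
          then show ?thesis using HE_map_out[of y l f] gimg phi by (auto simp: HE_def)
        qed
      qed
      ultimately show "\<phi> \<in> HE_map l f ` HE l" by blast
    qed
  qed
  then show "is_unitary l (HE_map l f :: ((nat \<Rightarrow> 'r) \<Rightarrow> complex) \<Rightarrow> _)"
    using iso by (simp add: is_unitary_def)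
qed

end
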